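(* Let $n$ be a non-negative integer and let $a,b$ be integers with $\gcd(a,b)=1$, $b\neq 0$ and $b\neq\pm1$. Let $C_k=\frac{1}{k+1}\binom{2k}{k}$ be the $k$-th Catalan number and let $M_N(a,b)=\sum_{k=0}^{\lfloor N/2\rfloor}\binom{N}{2k}C_k a^k b^{N-2k}$ be the generalized Motzkin number. Then $$\omega_b\big(M_{2n}(a,b)\big)=\omega_b(C_n),\qquad \omega_b\big(M_{2n+1}(a,b)\big)=1+\omega_b\big((2n+1)C_n\big).$$
   Context: For an integer $x$ with $x\neq 0,\pm1$ and a nonzero integer $y$, $\omega_x(y)$ denotes the largest non-negative integer $e$ such that $x^e$ divides $y$. *)

theory Defs
  imports Main
begin

text \<open>omega x y: the largest e with x^e dividing y (meaningful for x not in {0,1,-1}, y nonzero).\<close>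
definition omega :: "int \<Rightarrow> int \<Rightarrow> nat" where
  "omega x y = (GREATEST e. x ^ e dvd y)"

definition catalan :: "nat \<Rightarrow> int" where
  "catalan k = int ((2 * k) choose k) div int (k + 1)"

definition motzkin :: "nat \<Rightarrow> int \<Rightarrow> int \<Rightarrow> int" where
  "motzkin N a b = (\<Sum>k = 0..N div 2. int (N choose (2 * k)) * catalan k * a ^ k * b ^ (N - 2 * k))"

end

theory Submission
  imports Defs Complex_Main "HOL-Computational_Algebra.Primes"
begin


lemma cat_mult: "catalan k * int (k+1) = int (2*k choose k)"
proof -
  have c: "coprime (Suc k) (Suc (2*k))"
    by (metis add_Suc add_Suc_right coprime_Suc_left_nat coprime_mult_left_iff mult.commute mult_2_right)
  have "Suc k dvd Suc (2*k) * (2*k choose k)"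
    using Suc_times_binomial_eq[of "2*k" k] by (metis dvd_triv_right)
  then have "Suc k dvd (2*k choose k)" using c by (metis coprime_dvd_mult_left_iff coprime_dvd_mult_right_iff)
  then have "int (k+1) dvd int (2*k choose k)" by (metis Suc_eq_plus1 of_nat_dvd_iff)
  then show ?thesis unfolding catalan_def by simp
qed

lemma cat_real: "real_of_int (catalan k) = fact (2*k) / (fact k * fact (Suc k))"
proof -
  have "real_of_int (catalan k) * real (k+1) = real (2*k choose k)"
    using arg_cong[OF cat_mult[of k], of real_of_int] by simp
  also have "\<dots> = fact (2*k) / (fact k * fact k)" by (simp add: binomial_fact)
  finally have "real_of_int (catalan k) = fact (2*k) / (fact k * fact k) / real (k+1)"
    by (simp add: eq_divide_eq mult_ac del: of_nat_Suc)
  then show ?thesis by (simp del: of_nat_Suc add: fact_Suc)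
qed

lemma id_even: "real (2*(k+j) choose (2*k)) * real_of_int (catalan k) * real (2*j choose j)
   = real_of_int (catalan (k+j)) * real ((k+j) choose k) * real (Suc (k+j) choose Suc k)"
proof -
  have a: "real (2*(k+j) choose (2*k)) = fact (2*(k+j)) / (fact (2*k) * fact (2*j))"
    by (subst binomial_fact) auto
  have b: "real (2*j choose j) = fact (2*j) / (fact j * fact j)" by (subst binomial_fact) auto
  have c: "real ((k+j) choose k) = fact (k+j) / (fact k * fact j)" by (subst binomial_fact) auto
  have d: "real (Suc (k+j) choose Suc k) = fact (Suc (k+j)) / (fact (Suc k) * fact j)" by (subst binomial_fact) auto
  show ?thesis unfolding a b c d cat_real by (simp del: fact_Suc add: field_simps)
qed

lemma id_odd: "real (Suc (2*(k+j)) choose (2*k)) * real_of_int (catalan k) * (real (Suc (2*j)) * real (2*j choose j))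
   = real (Suc (2*(k+j))) * real_of_int (catalan (k+j)) * real ((k+j) choose k) * real (Suc (k+j) choose Suc k)"
proof -
  have a: "real (Suc (2*(k+j)) choose (2*k)) = fact (Suc (2*(k+j))) / (fact (2*k) * fact (Suc (2*j)))"
    by (subst binomial_fact) auto
  have b: "real (2*j choose j) = fact (2*j) / (fact j * fact j)" by (subst binomial_fact) auto
  have c: "real ((k+j) choose k) = fact (k+j) / (fact k * fact j)" by (subst binomial_fact) auto
  have d: "real (Suc (k+j) choose Suc k) = fact (Suc (k+j)) / (fact (Suc k) * fact j)" by (subst binomial_fact) auto
  have e: "fact (Suc (2*(k+j))) = real (Suc (2*(k+j))) * (fact (2*(k+j)) :: real)" by simp
  have f: "fact (Suc (2*j)) = real (Suc (2*j)) * (fact (2*j) :: real)" by simp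
  show ?thesis unfolding a b c d e f cat_real by (simp del: fact_Suc of_nat_Suc add: field_simps)
qed


lemma mult_lemma:
  fixes b X Y :: int and e j :: nat
  assumes b: "b \<noteq> 0" and Y: "Y \<noteq> 0" and d: "b ^ e dvd X * Y"
    and np: "\<And>p. prime p \<Longrightarrow> \<not> p ^ (2*j) dvd Y"
  shows "b ^ Suc e dvd X * b ^ (2*j)"
proof (cases "X = 0")
  case True then show ?thesis by simp
next
  case X: False
  show ?thesis
  proof (rule multiplicity_le_imp_dvd)
    show "b ^ Suc e \<noteq> 0" using b by simp
    fix p :: int assume p: "prime p"
    then have pe: "prime_elem p" by (rule prime_imp_prime_elem)
    define v where "v = multiplicity p b"
    define x where "x = multiplicity p X"
    define y where "y = multiplicity p Y"
    have m1: "multiplicity p (b ^ Suc e) = Suc e * v"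
      unfolding v_def using pe b by (rule prime_elem_multiplicity_power_distrib)
    have m2: "multiplicity p (X * b ^ (2*j)) = x + 2*j*v"
      unfolding x_def v_def using pe b X
      by (simp add: prime_elem_multiplicity_mult_distrib prime_elem_multiplicity_power_distrib)
    have "multiplicity p (b ^ e) \<le> multiplicity p (X * Y)"
      using d X Y by (intro dvd_imp_multiplicity_le) auto
    then have m3: "e * v \<le> x + y"
      unfolding x_def y_def v_def using pe b X Y
      by (simp add: prime_elem_multiplicity_mult_distrib prime_elem_multiplicity_power_distrib)
    have m4: "y < 2*j"
    proof (rule ccontr)
      assume "\<not> y < 2*j"
      then have "p ^ (2*j) dvd Y" unfolding y_def by (intro multiplicity_dvd') simp
      with np[OF p] show False by simp
    qed
    show "multiplicity p (b ^ Suc e) \<le> multiplicity p (X * b ^ (2*j))"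
      unfolding m1 m2
    proof (cases v)
      case 0 then show "Suc e * v \<le> x + 2 * j * v" by simp
    next
      case (Suc v')
      note vs = this
      have h1: "v' \<le> 2*j*v'" using mult_le_mono1[of 1 "2*j" v'] m4 by simp
      have h2: "Suc e * v = e + e*v' + v' + 1" "2*j*v = 2*j + 2*j*v'" "e * v = e + e*v'"
        by (simp_all add: vs algebra_simps)
      show "Suc e * v \<le> x + 2 * j * v" using m3 m4 h1 h2 by linarith
    qed
  qed
qed

lemma central_binom_less: "1 \<le> j \<Longrightarrow> (2*j choose j) < 4 ^ j"
proof -
  assume j: "1 \<le> j"
  have "(\<Sum>i\<in>{0, j}. (2*j choose i)) \<le> (\<Sum>i\<le>2*j. (2*j choose i))"
    by (intro sum_mono2) auto
  also have "\<dots> = 4 ^ j" by (simp add: choose_row_sum power_mult)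
  finally show ?thesis using j by simp
qed

lemma odd_pow_bound: "2 \<le> j \<Longrightarrow> (2*j+1) * 4 ^ j \<le> (9::nat) ^ j"
proof (induction j rule: dec_induct)
  case base then show ?case by simp
next
  case (step m)
  have "(2 * Suc m + 1) * 4 ^ Suc m = 4 * (2*m+3) * 4 ^ m" by (simp add: algebra_simps)
  also have "\<dots> \<le> 9 * (2*m+1) * 4 ^ m" using step by (intro mult_right_mono) auto
  also have "\<dots> = 9 * ((2*m+1) * 4 ^ m)" by (simp add: algebra_simps)
  also have "\<dots> \<le> 9 * 9 ^ m" using step.IH by (rule mult_le_mono2)
  finally show ?case by simp
qed

lemma Y_even: "1 \<le> j \<Longrightarrow> prime (p::int) \<Longrightarrow> \<not> p ^ (2*j) dvd int (2*j choose j)"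
proof
  assume j: "1 \<le> j" and p: "prime p" and d: "p ^ (2*j) dvd int (2*j choose j)"
  have pos: "0 < (2*j choose j)" by simp
  have "p ^ (2*j) \<le> int (2*j choose j)" using dvd_imp_le_int[OF _ d] pos by simp
  moreover have "(2::int) ^ (2*j) \<le> p ^ (2*j)" using prime_ge_2_int[OF p] by (intro power_mono) auto
  moreover have "(2*j choose j) < 2 ^ (2*j)" using central_binom_less[OF j] by (simp add: power_mult)
  then have "int (2*j choose j) < int (2 ^ (2*j))" by (simp only: of_nat_less_iff)
  then have "int (2*j choose j) < 2 ^ (2*j)" by simp
  ultimately show False by linarith
qed

lemma Y_odd: "1 \<le> j \<Longrightarrow> prime (p::int) \<Longrightarrow> \<not> p ^ (2*j) dvd int ((2*j+1) * (2*j choose j))"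
proof
  assume j: "1 \<le> j" and p: "prime p" and d: "p ^ (2*j) dvd int ((2*j+1) * (2*j choose j))"
  show False
  proof (cases "p = 2")
    case True
    have "coprime ((2::int) ^ (2*j)) (int (2*j+1))" by simp
    moreover have "(2::int) ^ (2*j) dvd int (2*j+1) * int (2*j choose j)" using d True by (simp only: of_nat_mult)
    ultimately have "(2::int) ^ (2*j) dvd int (2*j choose j)" by (simp add: coprime_dvd_mult_right_iff)
    with Y_even[OF j, of 2] show False by simp
  next
    case False
    have p3: "3 \<le> p" using prime_ge_2_int[OF p] False by simp
    have "(2*j+1) * (2*j choose j) \<noteq> 0" by simp
    then have nz: "int ((2*j+1) * (2*j choose j)) \<noteq> 0" by (metis of_nat_eq_0_iff)
    have l1: "\<bar>p ^ (2*j)\<bar> \<le> \<bar>int ((2*j+1) * (2*j choose j))\<bar>" by (rule dvd_imp_le_int[OF nz d])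
    have l2: "\<bar>int ((2*j+1) * (2*j choose j))\<bar> = int ((2*j+1) * (2*j choose j))" by (rule abs_of_nat)
    have l3: "\<bar>p ^ (2*j)\<bar> = p ^ (2*j)" using p3 by simp
    have le: "p ^ (2*j) \<le> int ((2*j+1) * (2*j choose j))" using l1 l2 l3 by linarith
    have "(9::int) ^ j \<le> (p^2) ^ j" using p3 by (intro power_mono) (auto simp: power2_eq_square intro: order_trans[OF _ mult_mono[of 3 p 3 p]])
    then have p9: "(9::int) ^ j \<le> p ^ (2*j)" by (simp add: power_mult)
    have "(2*j+1) * (2*j choose j) < (9::nat) ^ j"
    proof (cases "j = 1")
      case True then show ?thesis by (simp add: numeral_2_eq_2)
    next
      case False
      then have j2: "2 \<le> j" using j by simp
      have "(2*j+1) * (2*j choose j) < (2*j+1) * 4 ^ j" using central_binom_less[OF j] by (intro mult_strict_left_mono) auto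
      also have "\<dots> \<le> 9 ^ j" using odd_pow_bound[OF j2] .
      finally show ?thesis .
    qed
    then have "int ((2*j+1) * (2*j choose j)) < int (9 ^ j)" by (simp only: of_nat_less_iff)
    then have "int ((2*j+1) * (2*j choose j)) < 9 ^ j" by simp
    with le p9 show False by linarith
  qed
qed



lemma omega_eq:
  fixes b y :: int
  assumes "b ^ e dvd y" "\<not> b ^ Suc e dvd y"
  shows "omega b y = e"
  unfolding omega_def
proof (rule Greatest_equality)
  show "b ^ e dvd y" by fact
  fix e' assume h: "b ^ e' dvd y"
  show "e' \<le> e"
  proof (rule ccontr)
    assume "\<not> e' \<le> e"
    then have "b ^ Suc e dvd b ^ e'" by (intro le_imp_power_dvd) simp
    with h assms(2) show False using dvd_trans by blast
  qed
qed

lemma omega_props: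
  fixes b y :: int
  assumes "\<bar>b\<bar> \<ge> 2" "y \<noteq> 0"
  shows "b ^ omega b y dvd y" "\<not> b ^ Suc (omega b y) dvd y"
proof -
  have bnd: "e \<le> nat \<bar>y\<bar>" if "b ^ e dvd y" for e
  proof -
    have "\<bar>b\<bar> ^ e \<le> \<bar>y\<bar>" using dvd_imp_le_int[OF assms(2) that] by (simp add: power_abs)
    moreover have "(2::int) ^ e \<le> \<bar>b\<bar> ^ e" using assms(1) by (intro power_mono) auto
    moreover have "int e < 2 ^ e" using less_exp[of e] by (metis of_nat_less_iff of_nat_numeral of_nat_power)
    ultimately show ?thesis by linarith
  qed
  show 1: "b ^ omega b y dvd y" unfolding omega_def
    by (rule GreatestI_nat[of _ 0]) (use bnd in auto)
  show "\<not> b ^ Suc (omega b y) dvd y"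
  proof
    assume "b ^ Suc (omega b y) dvd y"
    then have "Suc (omega b y) \<le> omega b y" unfolding omega_def
      by (rule Greatest_le_nat) (use bnd in auto)
    then show False by simp
  qed
qed

lemma omega_main:
  fixes a b D R :: int
  assumes b: "\<bar>b\<bar> \<ge> 2" and ab: "coprime a b" and D: "D \<noteq> 0"
    and R: "b ^ Suc (omega b D) dvd R"
  shows "b ^ omega b D dvd D * a ^ n + R \<and> \<not> b ^ Suc (omega b D) dvd D * a ^ n + R"
proof -
  define e where "e = omega b D"
  have d1: "b ^ e dvd D" and d2: "\<not> b ^ Suc e dvd D" using omega_props[OF b D] unfolding e_def by auto
  have "b ^ e dvd b ^ Suc e" by (rule le_imp_power_dvd) simp
  then have "b ^ e dvd R" using R unfolding e_def[symmetric] by (rule dvd_trans)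
  then have c1: "b ^ e dvd D * a ^ n + R" using d1 by simp
  have c2: "\<not> b ^ Suc e dvd D * a ^ n + R"
  proof
    assume "b ^ Suc e dvd D * a ^ n + R"
    then have "b ^ Suc e dvd D * a ^ n" using R unfolding e_def[symmetric] by (simp add: dvd_add_left_iff)
    moreover have "coprime (b ^ Suc e) (a ^ n)" using ab by (simp add: coprime_commute)
    ultimately have "b ^ Suc e dvd D" by (simp add: coprime_dvd_mult_left_iff)
    with d2 show False by simp
  qed
  show ?thesis using c1 c2 unfolding e_def by simp
qed

lemma id_even_int:
  "int (2*(k+j) choose (2*k)) * catalan k * int (2*j choose j)
   = catalan (k+j) * (int ((k+j) choose k) * int (Suc (k+j) choose Suc k))"
proof -
  have "real_of_int (int (2*(k+j) choose (2*k)) * catalan k * int (2*j choose j))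
     = real_of_int (catalan (k+j) * (int ((k+j) choose k) * int (Suc (k+j) choose Suc k)))"
    using id_even[of k j] by (simp only: of_int_mult of_int_of_nat_eq of_nat_mult mult.assoc)
  then show ?thesis by (simp only: of_int_eq_iff)
qed

lemma id_odd_int:
  "int (Suc (2*(k+j)) choose (2*k)) * catalan k * (int (2*j+1) * int (2*j choose j))
   = (int (2*(k+j)+1) * catalan (k+j)) * (int ((k+j) choose k) * int (Suc (k+j) choose Suc k))"
proof -
  have "real_of_int (int (Suc (2*(k+j)) choose (2*k)) * catalan k * (int (2*j+1) * int (2*j choose j)))
     = real_of_int ((int (2*(k+j)+1) * catalan (k+j)) * (int ((k+j) choose k) * int (Suc (k+j) choose Suc k)))"
    using id_odd[of k j] by (simp only: of_int_mult of_int_of_nat_eq of_nat_mult mult.assoc Suc_eq_plus1)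
  then show ?thesis by (simp only: of_int_eq_iff)
qed



lemma cat_nz: "catalan n \<noteq> 0"
proof
  assume "catalan n = 0"
  then have "int (2*n choose n) = 0" using cat_mult[of n] by simp
  then show False by simp
qed

lemma term_even:
  fixes a b :: int
  assumes b: "\<bar>b\<bar> \<ge> 2" and k: "k < n"
  shows "b ^ Suc (omega b (catalan n)) dvd int (2*n choose (2*k)) * catalan k * a ^ k * b ^ (2*n - 2*k)"
proof -
  define j where "j = n - k"
  have n: "n = k + j" and j: "1 \<le> j" using k unfolding j_def by auto
  define X where "X = int (2*(k+j) choose (2*k)) * catalan k"
  have "b ^ omega b (catalan n) dvd catalan n" using omega_props(1)[OF b cat_nz] .
  then have dd: "b ^ omega b (catalan n) dvd X * int (2*j choose j)"
    unfolding X_def id_even_int n by (rule dvd_mult2)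
  have "b ^ Suc (omega b (catalan n)) dvd X * b ^ (2*j)"
  proof (rule mult_lemma[OF _ _ dd])
    show "b \<noteq> 0" using b by auto
    show "int (2*j choose j) \<noteq> 0" by simp
  qed (rule Y_even[OF j])
  then have "b ^ Suc (omega b (catalan n)) dvd X * b ^ (2*j) * a ^ k" by (rule dvd_mult2)
  moreover have "X * b ^ (2*j) * a ^ k = int (2*n choose (2*k)) * catalan k * a ^ k * b ^ (2*n - 2*k)"
    unfolding X_def n by (simp add: mult_ac)
  ultimately show ?thesis by simp
qed

lemma term_odd:
  fixes a b :: int
  assumes b: "\<bar>b\<bar> \<ge> 2" and k: "k < n"
  shows "b ^ Suc (omega b (int (2*n+1) * catalan n)) dvd int (Suc (2*n) choose (2*k)) * catalan k * a ^ k * b ^ (2*n - 2*k)"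
proof -
  define j where "j = n - k"
  have n: "n = k + j" and j: "1 \<le> j" using k unfolding j_def by auto
  define X where "X = int (Suc (2*(k+j)) choose (2*k)) * catalan k"
  have nz: "int (2*n+1) * catalan n \<noteq> 0" using cat_nz by simp
  have "b ^ omega b (int (2*n+1) * catalan n) dvd int (2*n+1) * catalan n" using omega_props(1)[OF b nz] .
  then have dd: "b ^ omega b (int (2*n+1) * catalan n) dvd X * (int (2*j+1) * int (2*j choose j))"
    unfolding X_def id_odd_int n by (rule dvd_mult2)
  have "b ^ Suc (omega b (int (2*n+1) * catalan n)) dvd X * b ^ (2*j)"
  proof (rule mult_lemma[OF _ _ dd])
    show "b \<noteq> 0" using b by auto
    show "int (2*j+1) * int (2*j choose j) \<noteq> 0" by simp
    fix p :: int assume "prime p"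
    from Y_odd[OF j this] show "\<not> p ^ (2*j) dvd int (2*j+1) * int (2*j choose j)" by (metis of_nat_mult)
  qed
  then have "b ^ Suc (omega b (int (2*n+1) * catalan n)) dvd X * b ^ (2*j) * a ^ k" by (rule dvd_mult2)
  moreover have "X * b ^ (2*j) * a ^ k = int (Suc (2*n) choose (2*k)) * catalan k * a ^ k * b ^ (2*n - 2*k)"
    unfolding X_def n by (simp add: mult_ac)
  ultimately show ?thesis by simp
qed

theorem theorem9:
  fixes n :: nat and a b :: int
  assumes "gcd a b = 1" and "b \<noteq> 0" and "b \<noteq> 1" and "b \<noteq> -1"
  shows "omega b (motzkin (2 * n) a b) = omega b (catalan n)
       \<and> omega b (motzkin (2 * n + 1) a b) = 1 + omega b (int (2 * n + 1) * catalan n)"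
proof
  have b: "\<bar>b\<bar> \<ge> 2" using assms(2-4) by linarith
  have ab: "coprime a b" using assms(1) by (simp add: coprime_iff_gcd_eq_1)
  define f where "f = (\<lambda>k. int (2*n choose (2*k)) * catalan k * a ^ k * b ^ (2*n - 2*k))"
  have "motzkin (2 * n) a b = sum f {0..<Suc n}"
    unfolding motzkin_def f_def by (simp add: atLeastLessThanSuc_atLeastAtMost)
  also have "\<dots> = catalan n * a ^ n + sum f {0..<n}" by (simp add: f_def)
  finally have M: "motzkin (2 * n) a b = catalan n * a ^ n + sum f {0..<n}" .
  have R: "b ^ Suc (omega b (catalan n)) dvd sum f {0..<n}"
    by (rule dvd_sum) (use term_even[OF b] in \<open>auto simp: f_def\<close>)
  from omega_main[OF b ab cat_nz R, of n]
  show "omega b (motzkin (2 * n) a b) = omega b (catalan n)"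
    unfolding M by (intro omega_eq) auto
next
  have b: "\<bar>b\<bar> \<ge> 2" using assms(2-4) by linarith
  have ab: "coprime a b" using assms(1) by (simp add: coprime_iff_gcd_eq_1)
  define D where "D = int (2 * n + 1) * catalan n"
  have nz: "D \<noteq> 0" using cat_nz by (simp add: D_def)
  define g where "g = (\<lambda>k. int (Suc (2*n) choose (2*k)) * catalan k * a ^ k * b ^ (2*n - 2*k))"
  have "motzkin (2 * n + 1) a b = (\<Sum>k = 0..n. b * g k)"
    unfolding motzkin_def g_def
  proof (rule sum.cong)
    show "{0..(2 * n + 1) div 2} = {0..n}" by simp
    fix k assume "k \<in> {0..n}"
    then have "2 * n + 1 - 2 * k = Suc (2*n - 2*k)" by auto
    then show "int (2 * n + 1 choose 2 * k) * catalan k * a ^ k * b ^ (2 * n + 1 - 2 * k) =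
         b * (int (Suc (2 * n) choose 2 * k) * catalan k * a ^ k * b ^ (2 * n - 2 * k))"
      by (simp add: mult_ac)
  qed
  also have "\<dots> = b * sum g {0..<Suc n}"
    by (simp add: sum_distrib_left atLeastLessThanSuc_atLeastAtMost)
  also have "sum g {0..<Suc n} = D * a ^ n + sum g {0..<n}" by (simp add: g_def D_def mult_ac)
  finally have M: "motzkin (2 * n + 1) a b = b * (D * a ^ n + sum g {0..<n})" .
  have R: "b ^ Suc (omega b D) dvd sum g {0..<n}"
    by (rule dvd_sum) (use term_odd[OF b] in \<open>auto simp: g_def D_def\<close>)
  from omega_main[OF b ab nz R, of n]
  have h1: "b ^ omega b D dvd D * a ^ n + sum g {0..<n}"
    and h2: "\<not> b ^ Suc (omega b D) dvd D * a ^ n + sum g {0..<n}" by auto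
  have "omega b (motzkin (2 * n + 1) a b) = Suc (omega b D)"
    unfolding M
  proof (rule omega_eq)
    show "b ^ Suc (omega b D) dvd b * (D * a ^ n + sum g {0..<n})"
      using h1 by simp
    show "\<not> b ^ Suc (Suc (omega b D)) dvd b * (D * a ^ n + sum g {0..<n})"
      using h2 assms(2) by simp
  qed
  then show "omega b (motzkin (2 * n + 1) a b) = 1 + omega b (int (2 * n + 1) * catalan n)"
    by (simp add: D_def)
qed

end
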